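(* Let $k\in\mathbb N$ and $f\in\mathcal R^k(\mathbb R^n)$. Let $p,q\in\mathbb R[x_1,\dots,x_n]$ with $q$ nonvanishing on $\mathrm{dom}(f)$ and $f=\frac{p}{q}$ on $\mathrm{dom}(f)$. Then for all $l\in\mathbb N$ and all integers $t\ge1$, the function $p^lf^t$ belongs to $\mathcal R^{k+l}(\mathbb R^n)$.
   Context: For $k\in\mathbb N\cup\{\infty\}$ and $n\ge 1$, $\mathcal R^k(\mathbb R^n)$ denotes the ring of $k$-regulous functions: functions $f:\mathbb R^n\to\mathbb R$ of class $C^k$ for which there exist a nonempty Zariski open set $U\subseteq\mathbb R^n$ and polynomials $p,q$ with $q$ nonvanishing on $U$ and $f=p/q$ on $U$. Such an $f$ determines a rational function; $\mathrm{dom}(f)$ is the largest Zariski open set on which this rational function is regular, and $\mathrm{pol}(f)=\mathbb R^n\setminus\mathrm{dom}(f)$. *)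

theory Defs
  imports "HOL-Analysis.Analysis"
begin

inductive_set poly_fun :: "(real^'n \<Rightarrow> real) set" where
  pf_const: "(\<lambda>x. c) \<in> poly_fun"
| pf_coord: "(\<lambda>x. x $ i) \<in> poly_fun"
| pf_add: "p \<in> poly_fun \<Longrightarrow> q \<in> poly_fun \<Longrightarrow> (\<lambda>x. p x + q x) \<in> poly_fun"
| pf_mult: "p \<in> poly_fun \<Longrightarrow> q \<in> poly_fun \<Longrightarrow> (\<lambda>x. p x * q x) \<in> poly_fun"

definition zariski_closed :: "(real^'n) set \<Rightarrow> bool" where
  "zariski_closed S \<longleftrightarrow> (\<exists>P \<subseteq> poly_fun. S = {x. \<forall>p\<in>P. p x = 0})"

definition zariski_open :: "(real^'n) set \<Rightarrow> bool" where
  "zariski_open U \<longleftrightarrow> zariski_closed (- U)"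

fun Ck :: "nat \<Rightarrow> (real^'n \<Rightarrow> real) \<Rightarrow> bool" where
  "Ck 0 f \<longleftrightarrow> continuous_on UNIV f"
| "Ck (Suc k) f \<longleftrightarrow> (\<exists>f'. (\<forall>x. (f has_derivative f' x) (at x)) \<and>
                          (\<forall>i. Ck k (\<lambda>x. f' x (axis i 1))))"

definition rational_rep :: "(real^'n \<Rightarrow> real) \<Rightarrow> (real^'n \<Rightarrow> real) \<Rightarrow> (real^'n \<Rightarrow> real) \<Rightarrow> bool" where
  "rational_rep f a b \<longleftrightarrow> a \<in> poly_fun \<and> b \<in> poly_fun \<and>
     (\<exists>U. zariski_open U \<and> U \<noteq> {} \<and> (\<forall>y\<in>U. b y \<noteq> 0 \<and> f y = a y / b y))"

definition regulous :: "nat \<Rightarrow> (real^'n \<Rightarrow> real) \<Rightarrow> bool" where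
  "regulous k f \<longleftrightarrow> Ck k f \<and> (\<exists>p q. rational_rep f p q)"

definition rdom :: "(real^'n \<Rightarrow> real) \<Rightarrow> (real^'n) set" where
  "rdom f = {x. \<exists>a b. rational_rep f a b \<and> b x \<noteq> 0}"

definition pol :: "(real^'n \<Rightarrow> real) \<Rightarrow> (real^'n) set" where
  "pol f = UNIV - rdom f"

end

theory Submission
  imports Defs "HOL-Computational_Algebra.Polynomial"
begin

lemma Ck_Suc_imp: "Ck (Suc k) f \<Longrightarrow> Ck k f"
proof (induction k arbitrary: f)
  case 0
  then obtain f' where "\<forall>x. (f has_derivative f' x) (at x)" by auto
  then show ?case
    by (auto intro!: continuous_at_imp_continuous_on has_derivative_continuous)
next
  case (Suc k)
  then obtain f' where "\<forall>x. (f has_derivative f' x) (at x)" "\<forall>i. Ck (Suc k) (\<lambda>x. f' x (axis i 1))"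
    by auto
  then show ?case using Suc.IH by auto
qed

lemma Ck_mono: "m \<le> k \<Longrightarrow> Ck k f \<Longrightarrow> Ck m f"
proof (induction k)
  case 0 then show ?case by simp
next
  case (Suc k)
  then show ?case using Ck_Suc_imp le_Suc_eq by blast
qed

lemma Ck_const: "Ck k (\<lambda>x. c)"
proof (induction k arbitrary: c)
  case 0 then show ?case by simp
next
  case (Suc k)
  show ?case
    by (simp, rule exI[of _ "\<lambda>x h. 0"], auto simp: Suc.IH)
qed

lemma Ck_add: "Ck k f \<Longrightarrow> Ck k g \<Longrightarrow> Ck k (\<lambda>x. f x + g x)"
proof (induction k arbitrary: f g)
  case 0 then show ?case by (auto intro: continuous_intros)
next
  case (Suc k)
  from Suc.prems obtain f' g' where f: "\<forall>x. (f has_derivative f' x) (at x)" "\<forall>i. Ck k (\<lambda>x. f' x (axis i 1))"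
    and g: "\<forall>x. (g has_derivative g' x) (at x)" "\<forall>i. Ck k (\<lambda>x. g' x (axis i 1))" by auto
  show ?case
    apply simp
    apply (rule exI[of _ "\<lambda>x h. f' x h + g' x h"])
    using f g Suc.IH by (auto intro: has_derivative_add)
qed

lemma Ck_mult: "Ck k f \<Longrightarrow> Ck k g \<Longrightarrow> Ck k (\<lambda>x. f x * g x)"
proof (induction k arbitrary: f g)
  case 0 then show ?case by (auto intro: continuous_intros)
next
  case (Suc k)
  from Suc.prems obtain f' g' where f: "\<forall>x. (f has_derivative f' x) (at x)" "\<forall>i. Ck k (\<lambda>x. f' x (axis i 1))"
    and g: "\<forall>x. (g has_derivative g' x) (at x)" "\<forall>i. Ck k (\<lambda>x. g' x (axis i 1))" by auto
  have fk: "Ck k f" "Ck k g" using Suc.prems Ck_Suc_imp by blast+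
  show ?case
    apply simp
    apply (rule exI[of _ "\<lambda>x h. f x * g' x h + f' x h * g x"])
    using f g fk by (auto intro!: has_derivative_mult Ck_add Suc.IH)
qed

lemma Ck_pow: "Ck k f \<Longrightarrow> Ck k (\<lambda>x. f x ^ n)"
  by (induction n) (auto intro: Ck_const Ck_mult)

lemma Ck_coord: "Ck k (\<lambda>x. x $ i)"
proof (cases k)
  case 0 then show ?thesis by (auto intro: continuous_intros)
next
  case (Suc m)
  show ?thesis unfolding Suc
    apply simp
    apply (rule exI[of _ "\<lambda>x h. h $ i"])
    by (auto intro: bounded_linear.has_derivative[OF bounded_linear_vec_nth] has_derivative_ident Ck_const)
qed

lemma poly_Ck: "p \<in> poly_fun \<Longrightarrow> Ck k p"
  by (induction rule: poly_fun.induct) (auto intro: Ck_const Ck_coord Ck_add Ck_mult)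

lemma poly_fun_pow: "p \<in> poly_fun \<Longrightarrow> (\<lambda>x. p x ^ n) \<in> poly_fun"
  by (induction n) (auto intro: poly_fun.intros)

lemma poly_fun_line: "b \<in> poly_fun \<Longrightarrow> \<exists>P. \<forall>t. b (u + t *\<^sub>R v) = poly P t"
proof (induction rule: poly_fun.induct)
  case (pf_const c) then show ?case by (rule exI[of _ "[:c:]"]) simp
next
  case (pf_coord i) then show ?case by (rule exI[of _ "[:u $ i, v $ i:]"]) (simp add: algebra_simps)
next
  case (pf_add p q)
  then obtain P Q where "\<forall>t. p (u + t *\<^sub>R v) = poly P t" "\<forall>t. q (u + t *\<^sub>R v) = poly Q t" by blast
  then show ?case by (intro exI[of _ "P + Q"]) simp
next
  case (pf_mult p q)
  then obtain P Q where "\<forall>t. p (u + t *\<^sub>R v) = poly P t" "\<forall>t. q (u + t *\<^sub>R v) = poly Q t" by blast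
  then show ?case by (intro exI[of _ "P * Q"]) simp
qed

lemma poly_fun_deriv: "p \<in> poly_fun \<Longrightarrow>
  \<exists>P'. (\<forall>x. (p has_derivative (\<lambda>h. \<Sum>i\<in>UNIV. h $ i * P' i x)) (at x)) \<and> (\<forall>i. P' i \<in> poly_fun)"
proof (induction rule: poly_fun.induct)
  case (pf_const c) then show ?case
    by (intro exI[of _ "\<lambda>i x. 0"]) (auto intro: poly_fun.intros)
next
  case (pf_coord j)
  have e: "(\<lambda>h::real^'a. \<Sum>i\<in>UNIV. h $ i * (if i = j then 1 else 0)) = (\<lambda>h. h $ j)"
    by (auto simp: if_distrib cong: if_cong)
  show ?case
    apply (intro exI[of _ "\<lambda>i x. if i = j then 1 else 0"])
    apply (auto simp: e intro: poly_fun.intros bounded_linear.has_derivative[OF bounded_linear_vec_nth] has_derivative_ident)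
    done
next
  case (pf_add p q)
  then obtain P Q where P: "\<forall>x. (p has_derivative (\<lambda>h. \<Sum>i\<in>UNIV. h $ i * P i x)) (at x)" "\<forall>i. P i \<in> poly_fun"
    and Q: "\<forall>x. (q has_derivative (\<lambda>h. \<Sum>i\<in>UNIV. h $ i * Q i x)) (at x)" "\<forall>i. Q i \<in> poly_fun" by blast
  show ?case
    apply (intro exI[of _ "\<lambda>i x. P i x + Q i x"] conjI allI)
    subgoal for x
      using has_derivative_add[OF P(1)[rule_format, of x] Q(1)[rule_format, of x]]
      by (simp add: distrib_left sum.distrib)
    using P Q by (auto intro: poly_fun.intros)
next
  case (pf_mult p q)
  then obtain P Q where P: "\<forall>x. (p has_derivative (\<lambda>h. \<Sum>i\<in>UNIV. h $ i * P i x)) (at x)" "\<forall>i. P i \<in> poly_fun"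
    and Q: "\<forall>x. (q has_derivative (\<lambda>h. \<Sum>i\<in>UNIV. h $ i * Q i x)) (at x)" "\<forall>i. Q i \<in> poly_fun" by blast
  show ?case
    apply (intro exI[of _ "\<lambda>i x. p x * Q i x + P i x * q x"] conjI allI)
    subgoal for x
      using has_derivative_mult[OF P(1)[rule_format, of x] Q(1)[rule_format, of x]]
      by (simp add: distrib_left sum.distrib sum_distrib_left sum_distrib_right algebra_simps)
    subgoal for i
      using P Q pf_mult.hyps
      by (intro poly_fun.pf_add[of "\<lambda>a. p a * Q i a" "\<lambda>a. P i a * q a"] poly_fun.pf_mult) auto
    done
qed

lemma mvt_finite_exc:
  fixes \<phi> :: "real \<Rightarrow> real"
  assumes "finite S" "a \<le> b" "continuous_on {a..b} \<phi>"
    "\<And>t. a < t \<Longrightarrow> t < b \<Longrightarrow> t \<notin> S \<Longrightarrow> \<exists>d. (\<phi> has_real_derivative d) (at t) \<and> \<bar>d\<bar> \<le> B"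
  shows "\<bar>\<phi> b - \<phi> a\<bar> \<le> B * (b - a)"
  using assms
proof (induction S arbitrary: a b rule: finite_induct)
  case empty
  show ?case
  proof (cases "a = b")
    case True then show ?thesis by simp
  next
    case False
    then have ab: "a < b" using empty by simp
    have "\<exists>l z. a < z \<and> z < b \<and> DERIV \<phi> z :> l \<and> \<phi> b - \<phi> a = (b - a) * l"
      by (rule MVT[OF ab empty(2)]) (use empty(3) real_differentiable_def in blast)
    then obtain l z where z: "a < z" "z < b" "DERIV \<phi> z :> l" "\<phi> b - \<phi> a = (b - a) * l" by blast
    obtain d where d: "(\<phi> has_real_derivative d) (at z)" "\<bar>d\<bar> \<le> B" using empty(3)[OF z(1,2)] by blast
    have "l = d" using DERIV_unique[OF z(3) d(1)] .
    then have "\<bar>\<phi> b - \<phi> a\<bar> = (b - a) * \<bar>d\<bar>" using z(4) ab by (simp add: abs_mult)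
    also have "\<dots> \<le> B * (b - a)" using d(2) ab by (simp add: mult.commute mult_left_mono)
    finally show ?thesis .
  qed
next
  case (insert s S)
  show ?case
  proof (cases "a < s \<and> s < b")
    case True
    have 1: "\<bar>\<phi> s - \<phi> a\<bar> \<le> B * (s - a)"
      apply (rule insert.IH)
      using True insert.prems by (auto intro: continuous_on_subset)
    have 2: "\<bar>\<phi> b - \<phi> s\<bar> \<le> B * (b - s)"
      apply (rule insert.IH)
      using True insert.prems by (auto intro: continuous_on_subset)
    have "\<bar>\<phi> b - \<phi> a\<bar> \<le> \<bar>\<phi> s - \<phi> a\<bar> + \<bar>\<phi> b - \<phi> s\<bar>" by simp
    also have "\<dots> \<le> B * (b - a)" using 1 2 by (simp add: algebra_simps)
    finally show ?thesis .
  next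
    case False
    show ?thesis
      apply (rule insert.IH)
      using False insert.prems by auto
  qed
qed

lemma dense_nonzero:
  fixes b0 :: "real^'n \<Rightarrow> real"
  assumes "b0 \<in> poly_fun" "b0 c \<noteq> 0" "r > 0"
  shows "\<exists>x. dist x x0 < r \<and> b0 x \<noteq> 0"
proof -
  obtain P where P: "\<forall>t. b0 (x0 + t *\<^sub>R (c - x0)) = poly P t"
    using poly_fun_line[OF assms(1)] by blast
  have "poly P 1 \<noteq> 0" using P assms(2) by (metis add.commute diff_add_cancel scaleR_one)
  then have "P \<noteq> 0" by auto
  then have fin: "finite {t. poly P t = 0}" by (rule poly_roots_finite)
  define m where "m = min 1 (r / (norm (c - x0) + 1))"
  have m0: "m > 0" using assms(3) unfolding m_def by (simp add: add_pos_nonneg divide_pos_pos)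
    (smt (verit) divide_pos_pos norm_ge_zero)
  have "infinite ({0<..<m} - {t. poly P t = 0})"
    using fin m0 by (metis Diff_infinite_finite infinite_Ioo)
  then obtain t where t: "0 < t" "t < m" "poly P t \<noteq> 0"
    by (metis (mono_tags, lifting) DiffE finite.emptyI greaterThanLessThan_iff mem_Collect_eq subsetI finite_subset)
  have "t * norm (c - x0) \<le> m * norm (c - x0)" using t by (simp add: mult_right_mono)
  also have "\<dots> \<le> r / (norm (c - x0) + 1) * norm (c - x0)"
    unfolding m_def by (rule mult_right_mono) auto
  also have "\<dots> < r"
  proof -
    have n: "norm (c - x0) \<ge> 0" by simp
    have "r * norm (c - x0) < r * (norm (c - x0) + 1)" using assms(3) by simp
    moreover have "norm (c - x0) + 1 > 0" using n by linarith
    ultimately show ?thesis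
      by (metis divide_less_eq mult.commute times_divide_eq_left)
  qed
  finally have "dist (x0 + t *\<^sub>R (c - x0)) x0 < r"
    using t by (simp add: dist_norm)
  moreover have "b0 (x0 + t *\<^sub>R (c - x0)) \<noteq> 0" using P t by simp
  ultimately show ?thesis by blast
qed

lemma segment_bound:
  fixes g :: "real^'n \<Rightarrow> real" and G :: "'n \<Rightarrow> real^'n \<Rightarrow> real"
  assumes gc: "continuous_on UNIV g"
    and b0: "b0 \<in> poly_fun" "b0 x \<noteq> 0"
    and der: "\<And>z. b0 z \<noteq> 0 \<Longrightarrow> (g has_derivative (\<lambda>h. \<Sum>i\<in>UNIV. h $ i * G i z)) (at z)"
    and eps: "\<And>z. dist z x0 < \<delta> \<Longrightarrow> (\<Sum>i\<in>UNIV. \<bar>G i z - G i x0\<bar>) \<le> \<epsilon>"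
    and xy: "dist x x0 < \<delta>" "dist y x0 < \<delta>"
  shows "\<bar>g y - g x - (\<Sum>i\<in>UNIV. (y - x) $ i * G i x0)\<bar> \<le> \<epsilon> * norm (y - x)"
proof -
  define v where "v = y - x"
  define C where "C = (\<Sum>i\<in>UNIV. v $ i * G i x0)"
  define \<phi> where "\<phi> = (\<lambda>t. g (x + t *\<^sub>R v) - t * C)"
  obtain P where P: "\<forall>t. b0 (x + t *\<^sub>R v) = poly P t"
    using poly_fun_line[OF b0(1)] by blast
  have "P \<noteq> 0" using P b0(2) by (metis poly_0 scaleR_zero_left add.right_neutral)
  then have fin: "finite {t. poly P t = 0}" by (rule poly_roots_finite)
  have cont: "continuous_on {0..1} \<phi>"
    unfolding \<phi>_def
    by (intro continuous_intros continuous_on_compose2[OF gc]) auto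
  have "\<bar>\<phi> 1 - \<phi> 0\<bar> \<le> (\<epsilon> * norm v) * (1 - 0)"
  proof (rule mvt_finite_exc[OF fin _ cont])
    fix t :: real assume t: "0 < t" "t < 1" "t \<notin> {t. poly P t = 0}"
    define z where "z = x + t *\<^sub>R v"
    have bz: "b0 z \<noteq> 0" using t P unfolding z_def by simp
    have "z = (1 - t) *\<^sub>R x + t *\<^sub>R y" unfolding z_def v_def by (simp add: algebra_simps)
    then have zb: "dist z x0 < \<delta>"
      using convex_ball[of x0 \<delta>] xy t
      by (simp add: convex_def dist_commute)
    have d1: "((\<lambda>t. x + t *\<^sub>R v) has_derivative (\<lambda>s. s *\<^sub>R v)) (at t)"
      by (auto intro!: derivative_eq_intros)
    have d2: "((\<lambda>t. g (x + t *\<^sub>R v)) has_derivative (\<lambda>s. \<Sum>i\<in>UNIV. (s *\<^sub>R v) $ i * G i z)) (at t)"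
      using has_derivative_compose[OF d1 der[OF bz, unfolded z_def]] unfolding z_def .
    have d3: "(\<phi> has_derivative (\<lambda>s. (\<Sum>i\<in>UNIV. (s *\<^sub>R v) $ i * G i z) - s * C)) (at t)"
      unfolding \<phi>_def
      using has_derivative_diff[OF d2 has_derivative_mult_left[OF has_derivative_ident, of C]] .
    define d where "d = (\<Sum>i\<in>UNIV. v $ i * G i z) - C"
    have "(\<phi> has_real_derivative d) (at t)"
      apply (rule has_derivative_imp_has_field_derivative[OF d3])
      by (simp add: d_def sum_distrib_left algebra_simps)
    moreover have "\<bar>d\<bar> \<le> \<epsilon> * norm v"
    proof -
      have "d = (\<Sum>i\<in>UNIV. v $ i * (G i z - G i x0))"
        by (simp add: d_def C_def algebra_simps sum_subtractf)
      then have "\<bar>d\<bar> \<le> (\<Sum>i\<in>UNIV. \<bar>v $ i * (G i z - G i x0)\<bar>)"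
        by (simp add: sum_abs)
      also have "\<dots> \<le> (\<Sum>i\<in>UNIV. norm v * \<bar>G i z - G i x0\<bar>)"
        by (intro sum_mono) (simp add: abs_mult component_le_norm_cart mult_right_mono)
      also have "\<dots> = norm v * (\<Sum>i\<in>UNIV. \<bar>G i z - G i x0\<bar>)"
        by (simp add: sum_distrib_left)
      also have "\<dots> \<le> norm v * \<epsilon>" using eps[OF zb] by (simp add: mult_left_mono)
      finally show ?thesis by (simp add: mult.commute)
    qed
    ultimately show "\<exists>d. (\<phi> has_real_derivative d) (at t) \<and> \<bar>d\<bar> \<le> \<epsilon> * norm v" by blast
  qed simp
  then show ?thesis unfolding \<phi>_def C_def v_def by (simp add: abs_minus_commute algebra_simps)
qed

lemma ext_deriv:
  fixes g :: "real^'n \<Rightarrow> real" and G :: "'n \<Rightarrow> real^'n \<Rightarrow> real"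
  assumes gc: "continuous_on UNIV g"
    and Gc: "\<And>i. continuous_on UNIV (G i)"
    and b0: "b0 \<in> poly_fun" "b0 c \<noteq> 0"
    and der: "\<And>z. b0 z \<noteq> 0 \<Longrightarrow> (g has_derivative (\<lambda>h. \<Sum>i\<in>UNIV. h $ i * G i z)) (at z)"
  shows "(g has_derivative (\<lambda>h. \<Sum>i\<in>UNIV. h $ i * G i x0)) (at x0)"
proof (cases "b0 x0 = 0")
  case False then show ?thesis using der by blast
next
  case True
  have bl: "bounded_linear (\<lambda>h::real^'n. \<Sum>i\<in>UNIV. h $ i * G i x0)"
    unfolding linear_conv_bounded_linear[symmetric]
    by (rule linearI) (simp_all add: sum.distrib sum_distrib_left algebra_simps)
  show ?thesis
    unfolding has_derivative_at_alt
  proof (intro conjI bl allI impI)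
    fix \<epsilon> :: real assume e: "\<epsilon> > 0"
    have "continuous (at x0) (\<lambda>z. \<Sum>i\<in>UNIV. \<bar>G i z - G i x0\<bar>)"
      using Gc by (intro continuous_intros) (auto simp: continuous_on_eq_continuous_at)
    then obtain \<delta> where d: "\<delta> > 0" "\<And>z. dist z x0 < \<delta> \<Longrightarrow>
        dist (\<Sum>i\<in>UNIV. \<bar>G i z - G i x0\<bar>) (\<Sum>i\<in>UNIV. \<bar>G i x0 - G i x0\<bar>) < \<epsilon>"
      unfolding continuous_at_eps_delta using e by blast
    have eps: "\<And>z. dist z x0 < \<delta> \<Longrightarrow> (\<Sum>i\<in>UNIV. \<bar>G i z - G i x0\<bar>) \<le> \<epsilon>"
      using d(2) by (fastforce simp: dist_real_def)
    show "\<exists>d>0. \<forall>y. norm (y - x0) < d \<longrightarrow>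
       norm (g y - g x0 - (\<Sum>i\<in>UNIV. (y - x0) $ i * G i x0)) \<le> \<epsilon> * norm (y - x0)"
    proof (intro exI[of _ \<delta>] conjI allI impI d(1))
      fix y assume y: "norm (y - x0) < \<delta>"
      define F where "F = (\<lambda>x. \<bar>g y - g x - (\<Sum>i\<in>UNIV. (y - x) $ i * G i x0)\<bar> - \<epsilon> * norm (y - x))"
      show "norm (g y - g x0 - (\<Sum>i\<in>UNIV. (y - x0) $ i * G i x0)) \<le> \<epsilon> * norm (y - x0)"
      proof (rule ccontr)
        assume "\<not> ?thesis"
        then have F0: "F x0 > 0" unfolding F_def by simp
        have "continuous (at x0) F"
          unfolding F_def using gc
          by (intro continuous_intros) (auto simp: continuous_on_eq_continuous_at)
        then obtain r where r: "r > 0" "\<And>x. dist x x0 < r \<Longrightarrow> dist (F x) (F x0) < F x0"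
          unfolding continuous_at_eps_delta using F0 by blast
        obtain x where x: "dist x x0 < min r \<delta>" "b0 x \<noteq> 0"
          using dense_nonzero[OF b0, of "min r \<delta>" x0] r d(1) by auto
        have "F x > 0" using r(2)[of x] x(1) by (auto simp: dist_real_def)
        moreover have "F x \<le> 0"
          using segment_bound[OF gc b0(1) x(2) der eps, where y=y] x y
          by (simp add: F_def dist_norm)
        ultimately show False by simp
      qed
    qed
  qed
qed

lemma alg_id:
  fixes P Q a b :: real
  assumes "Q \<noteq> 0"
  shows "P ^ Suc l * (of_nat (Suc s) * (- P * (inverse Q * b * inverse Q) + a / Q) * (P / Q) ^ (Suc s - 1))
     + of_nat (Suc l) * a * P ^ (Suc l - 1) * (P / Q) ^ Suc s
   = real (Suc l + Suc s) * a * (P ^ l * (P / Q) ^ Suc s) - real (Suc s) * b * (P ^ l * (P / Q) ^ (Suc s + 1))"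
  using assms by (simp add: field_simps power_Suc power_divide)

lemma sum_axis: "(\<Sum>j\<in>UNIV. axis i (1::real) $ j * G j x) = G i x"
proof -
  have "(\<Sum>j\<in>UNIV. axis i (1::real) $ j * G j x) = (\<Sum>j\<in>UNIV. if j = i then G j x else 0)"
    by (rule sum.cong) (auto simp: axis_def)
  then show ?thesis by simp
qed

theorem corollary2p11:
  fixes f p q :: "real^'n \<Rightarrow> real" and k :: nat
  assumes "regulous k f"
    and "p \<in> poly_fun" and "q \<in> poly_fun"
    and "\<forall>x\<in>rdom f. q x \<noteq> 0"
    and "\<forall>x\<in>rdom f. f x = p x / q x"
  shows "\<forall>(l::nat) (t::nat). t \<ge> 1 \<longrightarrow> regulous (k + l) (\<lambda>x. p x ^ l * f x ^ t)"
proof -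
  have fk: "Ck k f" using assms(1) unfolding regulous_def by blast
  obtain a0 b0 where rr: "rational_rep f a0 b0" using assms(1) unfolding regulous_def by blast
  then obtain U where U: "U \<noteq> {}" "\<forall>y\<in>U. b0 y \<noteq> 0 \<and> f y = a0 y / b0 y" "zariski_open U"
    and ab: "a0 \<in> poly_fun" "b0 \<in> poly_fun"
    unfolding rational_rep_def by blast
  obtain c where c: "b0 c \<noteq> 0" using U by blast
  have inrdom: "\<And>z. b0 z \<noteq> 0 \<Longrightarrow> z \<in> rdom f" unfolding rdom_def using rr by blast
  have qnz: "\<And>z. b0 z \<noteq> 0 \<Longrightarrow> q z \<noteq> 0" using inrdom assms(4) by blast
  have fpq: "\<And>z. b0 z \<noteq> 0 \<Longrightarrow> f z = p z / q z" using inrdom assms(5) by blast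
  have openO: "open {x. b0 x \<noteq> 0}"
    using open_Collect_neq[of b0 "\<lambda>x. 0"] poly_Ck[OF ab(2), of 0] by simp
  obtain P' where P': "\<forall>x. (p has_derivative (\<lambda>h. \<Sum>i\<in>UNIV. h $ i * P' i x)) (at x)" "\<forall>i. P' i \<in> poly_fun"
    using poly_fun_deriv[OF assms(2)] by blast
  obtain Q' where Q': "\<forall>x. (q has_derivative (\<lambda>h. \<Sum>i\<in>UNIV. h $ i * Q' i x)) (at x)" "\<forall>i. Q' i \<in> poly_fun"
    using poly_fun_deriv[OF assms(3)] by blast
  have f0: "Ck 0 f" using Ck_mono[OF _ fk, of 0] by simp
  have main: "\<forall>t. t \<ge> 1 \<longrightarrow> Ck (k + l) (\<lambda>x. p x ^ l * f x ^ t)" for l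
  proof (induction l)
    case 0
    show ?case using fk by (auto intro: Ck_mult Ck_const Ck_pow)
  next
    case (Suc l)
    show ?case
    proof (intro allI impI)
      fix t :: nat assume t: "t \<ge> 1"
      then obtain s where s: "t = Suc s" by (cases t) auto
      define A where "A = (\<lambda>x. p x ^ l * f x ^ t)"
      define B where "B = (\<lambda>x. p x ^ l * f x ^ (t + 1))"
      define G where "G = (\<lambda>i x. real (Suc l + t) * P' i x * A x + (- real t) * Q' i x * B x)"
      have AB: "Ck (k + l) A" "Ck (k + l) B" using Suc.IH t unfolding A_def B_def by auto
      have GC: "Ck (k + l) (G i)" for i
        unfolding G_def
        by (intro Ck_add Ck_mult Ck_const AB poly_Ck) (use P' Q' in auto)
      have Gc: "continuous_on UNIV (G i)" for i using Ck_mono[OF _ GC[of i], of 0] by simp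
      define g where "g = (\<lambda>x. p x ^ Suc l * f x ^ t)"
      have gc: "continuous_on UNIV g"
        using Ck_mult[OF Ck_pow[OF poly_Ck[OF assms(2)]] Ck_pow[OF f0], of "Suc l" t] unfolding g_def Ck.simps(1) .
      have der: "(g has_derivative (\<lambda>h. \<Sum>i\<in>UNIV. h $ i * G i z)) (at z)" if bz: "b0 z \<noteq> 0" for z
      proof -
        define pd where "pd = (\<lambda>h. \<Sum>i\<in>UNIV. h $ i * P' i z)"
        define qd where "qd = (\<lambda>h. \<Sum>i\<in>UNIV. h $ i * Q' i z)"
        have dp: "(p has_derivative pd) (at z)" using P' unfolding pd_def by blast
        have dq: "(q has_derivative qd) (at z)" using Q' unfolding qd_def by blast
        have d: "((\<lambda>x. p x ^ Suc l * (p x / q x) ^ t) has_derivative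
          (\<lambda>h. p z ^ Suc l * (of_nat t * (- p z * (inverse (q z) * qd h * inverse (q z)) + pd h / q z) * (p z / q z) ^ (t - 1))
             + of_nat (Suc l) * pd h * p z ^ (Suc l - 1) * (p z / q z) ^ t)) (at z)"
          using has_derivative_mult[OF has_derivative_power[OF dp, of "Suc l"]
                   has_derivative_power[OF has_derivative_divide[OF dp dq qnz[OF bz]], of t]]
          by (simp add: algebra_simps)
        have d2: "(g has_derivative
          (\<lambda>h. p z ^ Suc l * (of_nat t * (- p z * (inverse (q z) * qd h * inverse (q z)) + pd h / q z) * (p z / q z) ^ (t - 1))
             + of_nat (Suc l) * pd h * p z ^ (Suc l - 1) * (p z / q z) ^ t)) (at z)"
          by (rule has_derivative_transform_within_open[OF d openO]) (use bz fpq in \<open>auto simp: g_def\<close>)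
        show ?thesis
        proof (rule has_derivative_eq_rhs[OF d2], rule ext)
          fix h
          have "(\<Sum>i\<in>UNIV. h $ i * G i z) = real (Suc l + t) * pd h * A z - real t * qd h * B z"
          proof -
            have "(\<Sum>i\<in>UNIV. h $ i * G i z) = (\<Sum>i\<in>UNIV. (real (Suc l + t) * A z) * (h $ i * P' i z) - (real t * B z) * (h $ i * Q' i z))"
              unfolding G_def by (rule sum.cong) (auto simp: algebra_simps)
            also have "\<dots> = (real (Suc l + t) * A z) * pd h - (real t * B z) * qd h"
              unfolding pd_def qd_def by (simp add: sum_subtractf sum_distrib_left)
            finally show ?thesis by (simp add: algebra_simps)
          qed
          also have "\<dots> = p z ^ Suc l * (of_nat t * (- p z * (inverse (q z) * qd h * inverse (q z)) + pd h / q z) * (p z / q z) ^ (t - 1))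
             + of_nat (Suc l) * pd h * p z ^ (Suc l - 1) * (p z / q z) ^ t"
            unfolding A_def B_def s using alg_id[OF qnz[OF bz], of "p z" l s "qd h" "pd h"] fpq[OF bz]
            by (simp add: algebra_simps)
          finally show "p z ^ Suc l * (of_nat t * (- p z * (inverse (q z) * qd h * inverse (q z)) + pd h / q z) * (p z / q z) ^ (t - 1))
             + of_nat (Suc l) * pd h * p z ^ (Suc l - 1) * (p z / q z) ^ t = (\<Sum>i\<in>UNIV. h $ i * G i z)" by simp
        qed
      qed
      have "Ck (Suc (k + l)) g"
        apply simp
        apply (rule exI[of _ "\<lambda>x h. \<Sum>i\<in>UNIV. h $ i * G i x"])
        using ext_deriv[OF gc Gc ab(2) c der] GC by (simp add: sum_axis)
      then show "Ck (k + Suc l) (\<lambda>x. p x ^ Suc l * f x ^ t)" unfolding g_def by simp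
    qed
  qed
  show ?thesis
  proof (intro allI impI)
    fix l t :: nat assume t: "t \<ge> 1"
    have "rational_rep (\<lambda>x. p x ^ l * f x ^ t) (\<lambda>x. p x ^ l * a0 x ^ t) (\<lambda>x. b0 x ^ t)"
      unfolding rational_rep_def
    proof (intro conjI)
      show "(\<lambda>x. p x ^ l * a0 x ^ t) \<in> poly_fun"
        by (intro poly_fun.pf_mult poly_fun_pow assms(2) ab(1))
      show "(\<lambda>x. b0 x ^ t) \<in> poly_fun" by (intro poly_fun_pow ab(2))
      show "\<exists>U. zariski_open U \<and> U \<noteq> {} \<and> (\<forall>y\<in>U. b0 y ^ t \<noteq> 0 \<and> p y ^ l * f y ^ t = p y ^ l * a0 y ^ t / b0 y ^ t)"
        using U by (intro exI[of _ U]) (auto simp: power_divide)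
    qed
    then show "regulous (k + l) (\<lambda>x. p x ^ l * f x ^ t)"
      unfolding regulous_def using main t by blast
  qed
qed

end
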